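(* Let $q$ be a prime power and $u=(u_1,u_2,u_3)\in\mathbb{F}_q^3$. (1) If $\omega(u)=1$ and $\delta(u)=2$, then $|\widetilde{E}(u)|=0$. (2) If $\omega(u)=2$ and $\delta(u)=2$, then $|\widetilde{E}(u)|=0$. (3) If $\omega(u)=2$ and $\delta(u)=3$, then $|\widetilde{E}(u)|=(q-1)(q-3)$. (4) If $\omega(u)=3$ and $\delta(u)=1$, then $|\widetilde{E}(u)|=0$. (5) If $\omega(u)=3$ and $\delta(u)=2$, then $|\widetilde{E}(u)|=(q-1)(2q-6)$. (6) If $\omega(u)=3$ and $\delta(u)=3$, then $|\widetilde{E}(u)|=(q-1)(3q-11)$.
   Context: $\mathbb{F}_q$ is the finite field with $q$ elements. Hamming distance $d(u,v)=|\{i: u_i\ne v_i\}|$ on $\mathbb{F}_q^3$; $B(u)=\{v: d(u,v)\le1\}$; $E(u)=\bigcup_{\lambda\in\mathbb{F}_q}B(\lambda u)$. $\mathcal{D}_q=\{(u_1,u_2,u_3)\in\mathbb{F}_q^3 : u_1,u_2,u_3 \text{ pairwise distinct and nonzero}\}$ and $\widetilde{E}(u)=E(u)\cap\mathcal{D}_q$. The weight is $\omega(u)=|\{i: u_i\neq 0\}|$ and $\delta(u)=|\{u_1,u_2,u_3\}|$ is the number of distinct coordinate values. *)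

theory Defs
  imports Main
begin

type_synonym 'a vec3 = "'a \<times> 'a \<times> 'a"

fun coords :: "'a vec3 \<Rightarrow> 'a list" where
  "coords (a, b, c) = [a, b, c]"

definition hdist :: "'a vec3 \<Rightarrow> 'a vec3 \<Rightarrow> nat" where
  "hdist u v = card {i. i < 3 \<and> coords u ! i \<noteq> coords v ! i}"

definition hball :: "'a vec3 \<Rightarrow> 'a vec3 set" where
  "hball u = {v. hdist u v \<le> 1}"

definition smult3 :: "'a::times \<Rightarrow> 'a vec3 \<Rightarrow> 'a vec3" where
  "smult3 l u = (case u of (a, b, c) \<Rightarrow> (l * a, l * b, l * c))"

definition Eset :: "'a::field vec3 \<Rightarrow> 'a vec3 set" where
  "Eset u = (\<Union>l\<in>UNIV. hball (smult3 l u))"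

definition Dset :: "'a::field vec3 set" where
  "Dset = {(a, b, c). a \<noteq> 0 \<and> b \<noteq> 0 \<and> c \<noteq> 0 \<and> a \<noteq> b \<and> a \<noteq> c \<and> b \<noteq> c}"

definition Etilde :: "'a::field vec3 \<Rightarrow> 'a vec3 set" where
  "Etilde u = Eset u \<inter> Dset"

definition weight :: "'a::zero vec3 \<Rightarrow> nat" where
  "weight u = card {i. i < 3 \<and> coords u ! i \<noteq> 0}"

definition delta :: "'a vec3 \<Rightarrow> nat" where
  "delta u = card (set (coords u))"

end

theory Submission imports Defs begin
lemma card3: "card {i::nat. i<3 \<and> P i} = (if P 0 then 1 else 0) + (if P 1 then 1 else 0) + (if P 2 then 1 else 0)"
proof -
  have e: "{i::nat. i<3 \<and> P i} = {i. i=0 \<and> P 0} \<union> {i. i=1 \<and> P 1} \<union> {i. i=2 \<and> P 2}"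
  proof (intro set_eqI iffI)
    fix i assume "i \<in> {i::nat. i<3 \<and> P i}"
    then have "i<3" "P i" by auto
    then have "i = 0 \<or> i = 1 \<or> i = 2" by arith
    then show "i \<in> {i. i=0 \<and> P 0} \<union> {i. i=1 \<and> P 1} \<union> {i. i=2 \<and> P 2}" using \<open>P i\<close> by blast
  qed auto
  show ?thesis unfolding e by (cases "P 0"; cases "P 1"; cases "P 2") simp_all
qed
lemma hdist_eq: "hdist (a,b,c) (x,y,z) = (if a=x then 0 else 1) + (if b=y then 0 else 1) + (if c=z then 0 else 1)"
  unfolding hdist_def by (simp add: card3)

lemma weight_eq: "weight (a,b,c) = (if a=0 then 0 else 1) + (if b=0 then 0 else 1) + (if c=0 then 0 else 1)"
  unfolding weight_def by (simp add: card3)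

lemma delta_eq: "delta (a,b,c) = card {a,b,c}"
  unfolding delta_def by simp

lemma hball_mem: "(x,y,z) \<in> hball (a,b,c) \<longleftrightarrow> (y=b\<and>z=c) \<or> (x=a\<and>z=c) \<or> (x=a\<and>y=b)"
  unfolding hball_def by (simp add: hdist_eq)

lemma Dset_mem: "(x,y,z) \<in> Dset \<longleftrightarrow> x \<noteq> 0 \<and> y \<noteq> 0 \<and> z \<noteq> 0 \<and> x \<noteq> y \<and> x \<noteq> z \<and> y \<noteq> z"
  unfolding Dset_def by simp

lemma card_cond: "card {x::'a::finite. x \<notin> A \<and> B} = (if B then card (UNIV - A) else 0)"
  by (cases B) (simp_all add: Compl_eq_Diff_UNIV[symmetric] Collect_neg_eq)

lemma cardS:
  fixes a b c :: "'a::{field,finite}"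
  shows "card (hball (a,b,c) \<inter> Dset) = (if (a,b,c) \<in> Dset then 1 else 0)
    + (if b\<noteq>0\<and>c\<noteq>0\<and>b\<noteq>c then card (UNIV - {a,0,b,c}) else 0)
    + (if a\<noteq>0\<and>c\<noteq>0\<and>a\<noteq>c then card (UNIV - {b,0,a,c}) else 0)
    + (if a\<noteq>0\<and>b\<noteq>0\<and>a\<noteq>b then card (UNIV - {c,0,a,b}) else 0)"
proof -
  define A1 where "A1 = (\<lambda>x. (x,b,c)) ` {x. x \<notin> {a,0,b,c} \<and> (b\<noteq>0\<and>c\<noteq>0\<and>b\<noteq>c)}"
  define A2 where "A2 = (\<lambda>y. (a,y,c)) ` {y. y \<notin> {b,0,a,c} \<and> (a\<noteq>0\<and>c\<noteq>0\<and>a\<noteq>c)}"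
  define A3 where "A3 = (\<lambda>z. (a,b,z)) ` {z. z \<notin> {c,0,a,b} \<and> (a\<noteq>0\<and>b\<noteq>0\<and>a\<noteq>b)}"
  define A0 where "A0 = {(a,b,c)} \<inter> Dset"
  have e: "hball (a,b,c) \<inter> Dset = A0 \<union> (A1 \<union> (A2 \<union> A3))"
  proof (intro set_eqI)
    fix v :: "'a vec3"
    obtain x y z where v: "v = (x,y,z)" by (cases v) auto
    show "v \<in> hball (a,b,c) \<inter> Dset \<longleftrightarrow> v \<in> A0 \<union> (A1 \<union> (A2 \<union> A3))"
      unfolding v A0_def A1_def A2_def A3_def by (auto simp: hball_mem Dset_mem)
  qed
  have c1: "card A1 = (if b\<noteq>0\<and>c\<noteq>0\<and>b\<noteq>c then card (UNIV - {a,0,b,c}) else 0)"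
    unfolding A1_def by (subst card_image, simp add: inj_on_def, rule card_cond)
  have c2: "card A2 = (if a\<noteq>0\<and>c\<noteq>0\<and>a\<noteq>c then card (UNIV - {b,0,a,c}) else 0)"
    unfolding A2_def by (subst card_image, simp add: inj_on_def, rule card_cond)
  have c3: "card A3 = (if a\<noteq>0\<and>b\<noteq>0\<and>a\<noteq>b then card (UNIV - {c,0,a,b}) else 0)"
    unfolding A3_def by (subst card_image, simp add: inj_on_def, rule card_cond)
  have c0: "card A0 = (if (a,b,c) \<in> Dset then 1 else 0)" unfolding A0_def by auto
  have d23: "A2 \<inter> A3 = {}" unfolding A2_def A3_def by auto
  have d1: "A1 \<inter> (A2 \<union> A3) = {}" unfolding A1_def A2_def A3_def by auto
  have d0: "A0 \<inter> (A1 \<union> (A2 \<union> A3)) = {}" unfolding A0_def A1_def A2_def A3_def by auto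
  show ?thesis unfolding e
    by (simp add: card_Un_disjoint d0 d1 d23 c0 c1 c2 c3)
qed

lemma int_card_compl: "int (card (UNIV - (A::'a::finite set))) = int (card (UNIV::'a set)) - int (card A)"
  by (simp add: card_Diff_subset card_mono)

lemma smult3_eq: "smult3 l (a,b,c) = (l*a,l*b,l*c)" by (simp add: smult3_def)

lemma Etilde_UN:
  fixes a b c :: "'a::{field,finite}"
  shows "Etilde (a,b,c) = (\<Union>l\<in>UNIV-{0}. hball (smult3 l (a,b,c)) \<inter> Dset)"
proof -
  have "hball (smult3 0 (a,b,c)) \<inter> Dset = {}"
    by (auto simp: smult3_eq hball_mem Dset_mem)
  then show ?thesis unfolding Etilde_def Eset_def by blast
qed

lemma disj:
  fixes a b c :: "'a::{field,finite}"
  assumes "l \<noteq> m"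
  shows "(hball (smult3 l (a,b,c)) \<inter> Dset) \<inter> (hball (smult3 m (a,b,c)) \<inter> Dset) = {}"
proof (rule ccontr)
  assume "\<not> ?thesis"
  then obtain x y z where "(x,y,z) \<in> hball (smult3 l (a,b,c)) \<inter> Dset" "(x,y,z) \<in> hball (smult3 m (a,b,c)) \<inter> Dset"
    by auto
  then show False using assms by (auto simp: smult3_eq hball_mem Dset_mem)
qed

lemma card_Etilde:
  fixes a b c :: "'a::{field,finite}"
  assumes "\<And>l. l \<noteq> 0 \<Longrightarrow> int (card (hball (smult3 l (a,b,c)) \<inter> Dset)) = K"
  shows "int (card (Etilde (a,b,c))) = (int (card (UNIV::'a set)) - 1) * K"
proof -
  have "card (Etilde (a,b,c)) = (\<Sum>l\<in>UNIV-{0}. card (hball (smult3 l (a,b,c)) \<inter> Dset))"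
    unfolding Etilde_UN by (rule card_UN_disjoint) (simp_all add: disj)
  then have "int (card (Etilde (a,b,c))) = (\<Sum>l\<in>UNIV-{0::'a}. K)"
    using assms by (simp add: of_nat_sum)
  also have "\<dots> = (int (card (UNIV::'a set)) - 1) * K"
    by (simp add: card_Diff_singleton of_nat_diff Suc_le_eq card_gt_0_iff)
  finally show ?thesis .
qed

lemma cardS_int:
  fixes a b c :: "'a::{field,finite}"
  shows "int (card (hball (a,b,c) \<inter> Dset)) = (if (a,b,c) \<in> Dset then 1 else 0)
    + (if b\<noteq>0\<and>c\<noteq>0\<and>b\<noteq>c then int (card (UNIV::'a set)) - int (card {a,0,b,c}) else 0)
    + (if a\<noteq>0\<and>c\<noteq>0\<and>a\<noteq>c then int (card (UNIV::'a set)) - int (card {b,0,a,c}) else 0)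
    + (if a\<noteq>0\<and>b\<noteq>0\<and>a\<noteq>b then int (card (UNIV::'a set)) - int (card {c,0,a,b}) else 0)"
  unfolding cardS by (simp only: of_nat_add int_card_compl of_nat_0 of_nat_1 if_distrib[of int])

lemma case3:
  fixes a b c :: "'a::{field,finite}"
  assumes "weight (a,b,c) = 2" "delta (a,b,c) = 3" "l\<noteq>0"
  shows "int(card(hball (smult3 l (a,b,c)) \<inter> Dset)) = int(card (UNIV::'a set)) - 3"
  using assms unfolding smult3_eq cardS_int weight_eq delta_eq
  by (cases "a=0"; cases "b=0"; cases "c=0"; cases "a=b"; cases "a=c"; cases "b=c")
     (simp_all add: Dset_mem card_insert_if)


lemma c1:
  fixes a b c :: "'a::{field,finite}"
  assumes "weight (a,b,c) = 1" "delta (a,b,c) = 2"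
  shows "int (card (Etilde (a,b,c))) = (int (card (UNIV::'a set)) - 1) * (0)"
proof (rule card_Etilde)
  fix l :: 'a assume "l \<noteq> 0"
  then show "int(card(hball (smult3 l (a,b,c)) \<inter> Dset)) = 0"
  using assms unfolding smult3_eq cardS_int weight_eq delta_eq
  by (cases "a=0"; cases "b=0"; cases "c=0"; cases "a=b"; cases "a=c"; cases "b=c")
     (simp_all add: Dset_mem card_insert_if)
qed

lemma c2:
  fixes a b c :: "'a::{field,finite}"
  assumes "weight (a,b,c) = 2" "delta (a,b,c) = 2"
  shows "int (card (Etilde (a,b,c))) = (int (card (UNIV::'a set)) - 1) * (0)"
proof (rule card_Etilde)
  fix l :: 'a assume "l \<noteq> 0"
  then show "int(card(hball (smult3 l (a,b,c)) \<inter> Dset)) = 0"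
  using assms unfolding smult3_eq cardS_int weight_eq delta_eq
  by (cases "a=0"; cases "b=0"; cases "c=0"; cases "a=b"; cases "a=c"; cases "b=c")
     (simp_all add: Dset_mem card_insert_if)
qed

lemma c3:
  fixes a b c :: "'a::{field,finite}"
  assumes "weight (a,b,c) = 2" "delta (a,b,c) = 3"
  shows "int (card (Etilde (a,b,c))) = (int (card (UNIV::'a set)) - 1) * (int(card (UNIV::'a set)) - 3)"
proof (rule card_Etilde)
  fix l :: 'a assume "l \<noteq> 0"
  then show "int(card(hball (smult3 l (a,b,c)) \<inter> Dset)) = int(card (UNIV::'a set)) - 3"
  using assms unfolding smult3_eq cardS_int weight_eq delta_eq
  by (cases "a=0"; cases "b=0"; cases "c=0"; cases "a=b"; cases "a=c"; cases "b=c")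
     (simp_all add: Dset_mem card_insert_if)
qed

lemma c4:
  fixes a b c :: "'a::{field,finite}"
  assumes "weight (a,b,c) = 3" "delta (a,b,c) = 1"
  shows "int (card (Etilde (a,b,c))) = (int (card (UNIV::'a set)) - 1) * (0)"
proof (rule card_Etilde)
  fix l :: 'a assume "l \<noteq> 0"
  then show "int(card(hball (smult3 l (a,b,c)) \<inter> Dset)) = 0"
  using assms unfolding smult3_eq cardS_int weight_eq delta_eq
  by (cases "a=0"; cases "b=0"; cases "c=0"; cases "a=b"; cases "a=c"; cases "b=c")
     (simp_all add: Dset_mem card_insert_if)
qed

lemma c5:
  fixes a b c :: "'a::{field,finite}"
  assumes "weight (a,b,c) = 3" "delta (a,b,c) = 2"
  shows "int (card (Etilde (a,b,c))) = (int (card (UNIV::'a set)) - 1) * (2*int(card (UNIV::'a set)) - 6)"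
proof (rule card_Etilde)
  fix l :: 'a assume "l \<noteq> 0"
  then show "int(card(hball (smult3 l (a,b,c)) \<inter> Dset)) = 2*int(card (UNIV::'a set)) - 6"
  using assms unfolding smult3_eq cardS_int weight_eq delta_eq
  by (cases "a=0"; cases "b=0"; cases "c=0"; cases "a=b"; cases "a=c"; cases "b=c")
     (simp_all add: Dset_mem card_insert_if)
qed

lemma c6:
  fixes a b c :: "'a::{field,finite}"
  assumes "weight (a,b,c) = 3" "delta (a,b,c) = 3"
  shows "int (card (Etilde (a,b,c))) = (int (card (UNIV::'a set)) - 1) * (3*int(card (UNIV::'a set)) - 11)"
proof (rule card_Etilde)
  fix l :: 'a assume "l \<noteq> 0"
  then show "int(card(hball (smult3 l (a,b,c)) \<inter> Dset)) = 3*int(card (UNIV::'a set)) - 11"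
  using assms unfolding smult3_eq cardS_int weight_eq delta_eq
  by (cases "a=0"; cases "b=0"; cases "c=0"; cases "a=b"; cases "a=c"; cases "b=c")
     (simp_all add: Dset_mem card_insert_if)
qed

theorem theorem5:
  fixes u :: "'a::{field,finite} vec3"
  defines "q \<equiv> int (card (UNIV :: 'a set))"
  shows "(weight u = 1 \<and> delta u = 2 \<longrightarrow> card (Etilde u) = 0)
       \<and> (weight u = 2 \<and> delta u = 2 \<longrightarrow> card (Etilde u) = 0)
       \<and> (weight u = 2 \<and> delta u = 3 \<longrightarrow> int (card (Etilde u)) = (q - 1) * (q - 3))
       \<and> (weight u = 3 \<and> delta u = 1 \<longrightarrow> card (Etilde u) = 0)
       \<and> (weight u = 3 \<and> delta u = 2 \<longrightarrow> int (card (Etilde u)) = (q - 1) * (2 * q - 6))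
       \<and> (weight u = 3 \<and> delta u = 3 \<longrightarrow> int (card (Etilde u)) = (q - 1) * (3 * q - 11))"
proof -
  obtain a b c where u: "u = (a,b,c)" by (cases u) auto
  show ?thesis unfolding u q_def
    using c1[of a b c] c2[of a b c] c3[of a b c] c4[of a b c] c5[of a b c] c6[of a b c]
    by (simp only: mult_zero_right of_nat_eq_0_iff) auto
qed

end
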